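(* Let $0<b<1$ and $\varrho\ge0$ a function on $[0,b]$ with $\varrho/\zeta$ non-decreasing and bounded on $[0,b]$. Let $u\in C^{0,1}([0,b])$ and $\lambda\in\mathbb{R}$ satisfy $u'+(\frac1x+\widetilde\varrho)u+\lambda\zeta=0$ a.e. on $(0,b)$ with $u(0)=0$, $u(b)=1$. Then (i) $u(t)\ge t/b$ for all $t\in[0,b]$; (ii) if $\varrho\not\equiv0$ on $[0,b)$, then $u(t)>t/b$ for all $t\in(0,b)$.
   Context: $\zeta(t)=\frac2{1-t^2}$, $\widetilde\varrho(t)=t\zeta(t)+\varrho(t)$. (The function $t\mapsto t/b$ is the solution of the same problem when $\varrho\equiv0$.) *)

theory Defs
  imports "HOL-Analysis.Analysis"
begin

definition zeta :: "real \<Rightarrow> real" where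
  "zeta t = 2 / (1 - t^2)"

definition rho_tilde :: "(real \<Rightarrow> real) \<Rightarrow> real \<Rightarrow> real" where
  "rho_tilde \<rho> t = t * zeta t + \<rho> t"

end

theory Submission
  imports Defs
begin


lemma core_C:
  fixes f :: "real \<Rightarrow> real"
  assumes ab: "a \<le> b" and cont: "continuous_on {a..b} f" and negN: "negligible (f ` N)"
    and der: "\<And>x. x \<in> {a<..<b} \<Longrightarrow> x \<notin> N \<Longrightarrow> f x > 0 \<Longrightarrow> \<exists>D<0. (f has_real_derivative D) (at x)"
    and fb: "f b > 0"
  shows "f b \<le> f a"
proof (rule ccontr)
  assume "\<not> f b \<le> f a"
  hence fab: "f a < f b" by simp
  define p where "p = max (f a) 0"
  have pfb: "p < f b" using fab fb by (simp add: p_def)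
  have "\<not> {p<..<f b} \<subseteq> f ` N"
  proof
    assume "{p<..<f b} \<subseteq> f ` N"
    hence "negligible {p<..<f b}" using negN negligible_subset by blast
    thus False using negligible_interval(2)[of p "f b"] pfb by simp
  qed
  then obtain yv where yv: "p < yv" "yv < f b" "yv \<notin> f ` N" by (auto simp: subset_iff)
  define S where "S = {x\<in>{a..b}. f x \<le> yv}"
  have clS: "closed S" unfolding S_def
    by (rule continuous_on_closed_Collect_le[OF cont continuous_on_const]) simp
  have aS: "a \<in> S" using ab yv fab by (auto simp: S_def p_def)
  have bdd: "bdd_above S" by (auto simp: S_def bdd_above_def)
  define x0 where "x0 = Sup S"
  have x0S: "x0 \<in> S" unfolding x0_def using closed_contains_Sup[OF _ bdd clS] aS by blast
  have above: "\<And>x. x \<in> S \<Longrightarrow> x \<le> x0" unfolding x0_def using bdd cSup_upper by blast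
  have x0ab: "a \<le> x0" "x0 \<le> b" using x0S by (auto simp: S_def)
  have fx0: "f x0 \<le> yv" using x0S by (auto simp: S_def)
  have x0b: "x0 < b" using x0ab fx0 yv by (cases "x0 = b") auto
  have eq: "f x0 = yv"
  proof (rule ccontr)
    assume "f x0 \<noteq> yv"
    hence "f x0 \<le> yv" "yv \<le> f b" using fx0 yv by auto
    moreover have "continuous_on {x0..b} f" by (rule continuous_on_subset[OF cont]) (use x0ab in auto)
    ultimately obtain x where x: "x0 \<le> x" "x \<le> b" "f x = yv" using IVT'[of f x0 yv b] x0b by auto
    hence "x \<in> S" using x0ab by (auto simp: S_def)
    hence "x = x0" using above x by force
    thus False using x \<open>f x0 \<noteq> yv\<close> by simp
  qed
  have x0a: "a < x0" using eq yv x0ab by (cases "x0 = a") (auto simp: p_def)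
  have x0N: "x0 \<notin> N" using eq yv by auto
  have "f x0 > 0" using eq yv by (simp add: p_def)
  then obtain D where D: "D < 0" "(f has_real_derivative D) (at x0)" using der x0a x0b x0N by auto
  from DERIV_neg_dec_right[OF D(2) D(1)] obtain d where d: "d > 0" "\<And>h. h > 0 \<Longrightarrow> h < d \<Longrightarrow> f x0 > f (x0 + h)" by auto
  define h where "h = min (d/2) (b - x0)"
  have h: "h > 0" "h < d" "x0 + h \<le> b" using d x0b by (auto simp: h_def)
  have "x0 + h \<notin> S" using above h by force
  hence "f (x0 + h) > yv" using h x0ab by (auto simp: S_def)
  thus False using d(2)[OF h(1,2)] eq by simp
qed



lemma lemma_P:
  fixes f :: "real \<Rightarrow> real"
  assumes ab: "a \<le> b" and lip: "L-lipschitz_on {a..b} f" and negN: "negligible N"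
    and der: "\<And>x. x \<in> {a<..<b} \<Longrightarrow> x \<notin> N \<Longrightarrow> f x > 0 \<Longrightarrow> \<exists>D\<le>0. (f has_real_derivative D) (at x)"
    and fb: "f b > 0"
  shows "f b \<le> f a"
proof (rule ccontr)
  assume "\<not> f b \<le> f a"
  hence fab: "f a < f b" by simp
  hence ab': "a < b" using ab by (cases "a = b") auto
  define e where "e = min ((f b - f a) / (2*(b-a))) (f b / (2*(b-a)))"
  have e: "e > 0" using fab fb ab' by (auto simp: e_def)
  have "e * (b - a) \<le> (f b - f a) / (2*(b-a)) * (b - a)"
    by (rule mult_right_mono) (use ab' in \<open>auto simp: e_def\<close>)
  moreover have "(f b - f a) / (2*(b-a)) * (b - a) = (f b - f a)/2" using ab' by (simp add: field_simps)
  ultimately have e1: "e * (b - a) \<le> (f b - f a)/2" by linarith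
  have "e * (b - a) \<le> f b / (2*(b-a)) * (b - a)"
    by (rule mult_right_mono) (use ab' in \<open>auto simp: e_def\<close>)
  moreover have "f b / (2*(b-a)) * (b - a) = f b/2" using ab' by (simp add: field_simps)
  ultimately have e2: "e * (b - a) \<le> f b/2" by linarith
  define g where "g = (\<lambda>x. f x - e * (x - a))"
  have L0: "0 \<le> L" using lip lipschitz_on_nonneg by blast
  have "g b \<le> g a"
  proof (rule core_C[where N="N \<inter> {a..b}" and f=g and a=a and b=b])
    show "a \<le> b" by fact
    show "continuous_on {a..b} g" unfolding g_def
      by (intro continuous_intros lipschitz_on_continuous_on[OF lip])
    show "negligible (g ` (N \<inter> {a..b}))"
    proof (rule negligible_locally_Lipschitz_image)
      show "DIM(real) \<le> DIM(real)" by simp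
      show "negligible (N \<inter> {a..b})" using negN negligible_subset by blast
      fix x assume x: "x \<in> N \<inter> {a..b}"
      show "\<exists>T B. open T \<and> x \<in> T \<and> (\<forall>y\<in>(N \<inter> {a..b}) \<inter> T. norm (g y - g x) \<le> B * norm (y - x))"
      proof (intro exI conjI ballI)
        show "open UNIV" by simp
        show "x \<in> UNIV" by simp
        fix y assume y: "y \<in> (N \<inter> {a..b}) \<inter> UNIV"
        have "\<bar>f y - f x\<bar> \<le> L * \<bar>y - x\<bar>" using lipschitz_onD[OF lip, of y x] x y by (auto simp: dist_real_def)
        moreover have "\<bar>e * (y - x)\<bar> = e * \<bar>y - x\<bar>" using e by (simp add: abs_mult)
        ultimately show "norm (g y - g x) \<le> (L + e) * norm (y - x)"
        proof -
          have "norm (g y - g x) = \<bar>(f y - f x) - e * (y - x)\<bar>" by (simp add: g_def algebra_simps)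
          also have "\<dots> \<le> \<bar>f y - f x\<bar> + \<bar>e * (y - x)\<bar>" by (rule abs_triangle_ineq4)
          also have "\<dots> \<le> L * \<bar>y - x\<bar> + e * \<bar>y - x\<bar>" using calculation \<open>\<bar>f y - f x\<bar> \<le> L * \<bar>y - x\<bar>\<close> \<open>\<bar>e * (y - x)\<bar> = e * \<bar>y - x\<bar>\<close> by linarith
          also have "\<dots> = (L + e) * norm (y - x)" by (simp add: distrib_right)
          finally show ?thesis .
        qed
      qed
    qed
    show "0 < g b" using e2 fb by (simp add: g_def)
    fix x assume x: "x \<in> {a<..<b}" "x \<notin> N \<inter> {a..b}" "0 < g x"
    have "e * (x - a) > 0" using x e by simp
    hence "f x > 0" using x by (simp add: g_def)
    then obtain D where D: "D \<le> 0" "(f has_real_derivative D) (at x)" using der x by auto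
    have "(g has_real_derivative (D - e)) (at x)" unfolding g_def
      by (auto intro!: derivative_eq_intros D(2))
    thus "\<exists>D<0. (g has_real_derivative D) (at x)" using D e by (intro exI[of _ "D - e"]) auto
  qed
  thus False using e1 fab by (simp add: g_def)
qed

lemma lemma_M:
  fixes f :: "real \<Rightarrow> real"
  assumes ab: "a \<le> b" and lip: "\<exists>L. L-lipschitz_on {a..b} f" and negN: "negligible N"
    and der: "\<And>x. x \<in> {a<..<b} \<Longrightarrow> x \<notin> N \<Longrightarrow> \<exists>D\<ge>0. (f has_real_derivative D) (at x)"
  shows "f a \<le> f b"
proof -
  obtain L where L: "L-lipschitz_on {a..b} f" using lip by auto
  define h where "h = (\<lambda>x. f b - f x + 1)"
  have "L-lipschitz_on {a..b} h"
    using L by (auto simp: lipschitz_on_def h_def dist_real_def abs_minus_commute)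
  hence "h b \<le> h a"
  proof (rule lemma_P[OF ab _ negN, where f=h])
    fix x assume x: "x \<in> {a<..<b}" "x \<notin> N"
    then obtain D where D: "D \<ge> 0" "(f has_real_derivative D) (at x)" using der by auto
    have "(h has_real_derivative (- D)) (at x)" unfolding h_def
      by (auto intro!: derivative_eq_intros D(2))
    thus "\<exists>D\<le>0. (h has_real_derivative D) (at x)" using D by (intro exI[of _ "-D"]) auto
  qed (simp add: h_def)
  thus ?thesis by (simp add: h_def)
qed

lemma lemma_P':
  fixes f :: "real \<Rightarrow> real"
  assumes ab: "a \<le> b" and lip: "\<exists>L. L-lipschitz_on {a..b} f" and negN: "negligible N"
    and der: "\<And>x. x \<in> {a<..<b} \<Longrightarrow> x \<notin> N \<Longrightarrow> f x > 0 \<Longrightarrow> \<exists>D\<le>0. (f has_real_derivative D) (at x)"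
    and fb: "f b > 0"
  shows "f b \<le> f a"
  using lip lemma_P[OF ab _ negN der fb] by blast

lemma lip_mult:
  fixes f g :: "real \<Rightarrow> real"
  assumes S: "compact S" and lf: "\<exists>L. L-lipschitz_on S f" and lg: "\<exists>L. L-lipschitz_on S g"
  shows "\<exists>L. L-lipschitz_on S (\<lambda>x. f x * g x)"
proof -
  obtain Lf Lg where Lf: "Lf-lipschitz_on S f" and Lg: "Lg-lipschitz_on S g" using lf lg by auto
  have "compact (f ` S)" "compact (g ` S)"
    using S Lf Lg by (auto intro!: compact_continuous_image lipschitz_on_continuous_on)
  hence "bounded (f ` S)" "bounded (g ` S)" using compact_imp_bounded by auto
  then obtain A B where A: "\<And>x. x \<in> S \<Longrightarrow> \<bar>f x\<bar> \<le> A" and B: "\<And>x. x \<in> S \<Longrightarrow> \<bar>g x\<bar> \<le> B"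
    unfolding bounded_iff by (metis imageI real_norm_def)
  have A0: "\<And>x. x \<in> S \<Longrightarrow> 0 \<le> A" using A abs_ge_zero order_trans by blast
  have B0: "\<And>x. x \<in> S \<Longrightarrow> 0 \<le> B" using B abs_ge_zero order_trans by blast
  have Lf0: "0 \<le> Lf" "0 \<le> Lg" using Lf Lg lipschitz_on_nonneg by blast+
  show ?thesis
  proof (intro exI lipschitz_onI)
    fix x y assume xy: "x \<in> S" "y \<in> S"
    have "\<bar>f x * g x - f y * g y\<bar> = \<bar>f x * (g x - g y) + g y * (f x - f y)\<bar>" by (simp add: algebra_simps)
    also have "\<dots> \<le> \<bar>f x * (g x - g y)\<bar> + \<bar>g y * (f x - f y)\<bar>" by (rule abs_triangle_ineq)
    also have "\<dots> = \<bar>f x\<bar> * \<bar>g x - g y\<bar> + \<bar>g y\<bar> * \<bar>f x - f y\<bar>" by (simp add: abs_mult)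
    also have "\<dots> \<le> A * (Lg * \<bar>x - y\<bar>) + B * (Lf * \<bar>x - y\<bar>)"
    proof (rule add_mono)
      have "\<bar>g x - g y\<bar> \<le> Lg * \<bar>x - y\<bar>" using lipschitz_onD[OF Lg xy] by (simp add: dist_real_def)
      thus "\<bar>f x\<bar> * \<bar>g x - g y\<bar> \<le> A * (Lg * \<bar>x - y\<bar>)"
        by (rule mult_mono[OF A[OF xy(1)]]) (use A0[OF xy(1)] in auto)
      have "\<bar>f x - f y\<bar> \<le> Lf * \<bar>x - y\<bar>" using lipschitz_onD[OF Lf xy] by (simp add: dist_real_def)
      thus "\<bar>g y\<bar> * \<bar>f x - f y\<bar> \<le> B * (Lf * \<bar>x - y\<bar>)"
        by (rule mult_mono[OF B[OF xy(2)]]) (use B0[OF xy(2)] in auto)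
    qed
    also have "\<dots> = (\<bar>A\<bar> * Lg + \<bar>B\<bar> * Lf) * \<bar>x - y\<bar>"
      using A0[OF xy(1)] B0[OF xy(1)] by (simp add: distrib_right)
    finally show "dist (f x * g x) (f y * g y) \<le> (\<bar>A\<bar> * Lg + \<bar>B\<bar> * Lf) * dist x y"
      by (simp add: dist_real_def)
  next
    show "0 \<le> \<bar>A\<bar> * Lg + \<bar>B\<bar> * Lf" using Lf0 by simp
  qed
qed

lemma lip_add:
  fixes f g :: "real \<Rightarrow> real"
  assumes "\<exists>L. L-lipschitz_on S f" "\<exists>L. L-lipschitz_on S g"
  shows "\<exists>L. L-lipschitz_on S (\<lambda>x. f x + g x)"
  using assms lipschitz_on_add by blast

lemma lip_diff:
  fixes f g :: "real \<Rightarrow> real"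
  assumes "\<exists>L. L-lipschitz_on S f" "\<exists>L. L-lipschitz_on S g"
  shows "\<exists>L. L-lipschitz_on S (\<lambda>x. f x - g x)"
  using assms lipschitz_on_diff by blast

lemma lip_const: "\<exists>L. L-lipschitz_on S (\<lambda>x. c)"
  using lipschitz_on_constant by blast

lemma lip_deriv:
  fixes f :: "real \<Rightarrow> real"
  assumes "\<And>x. x \<in> {s..t} \<Longrightarrow> (f has_real_derivative f' x) (at x)"
    and "\<And>x. x \<in> {s..t} \<Longrightarrow> \<bar>f' x\<bar> \<le> B"
  shows "\<exists>L. L-lipschitz_on {s..t} f"
proof (intro exI lipschitz_onI)
  fix x y assume xy: "x \<in> {s..t}" "y \<in> {s..t}"
  have d: "\<And>z. z \<in> {s..t} \<Longrightarrow> (f has_field_derivative f' z) (at z within {s..t})"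
    using assms(1) has_field_derivative_at_within by blast
  have n: "\<And>z. z \<in> {s..t} \<Longrightarrow> norm (f' z) \<le> max B 0" using assms(2) by force
  show "dist (f x) (f y) \<le> max B 0 * dist x y"
    using field_differentiable_bound[of "{s..t}" f f' "max B 0" x y, OF _ d n xy]
    by (simp add: dist_real_def dist_norm)
qed simp



lemma zeta_facts:
  fixes x b :: real
  assumes "0 \<le> x" "x \<le> b" "b < 1"
  shows "2 \<le> zeta x" "zeta x \<le> 2 / (1 - b^2)" "0 < 1 - b^2" "0 < 1 - x^2"
proof -
  have "x * x \<le> b * b" using assms by (intro mult_mono) auto
  moreover have "b * b < 1" using assms by (smt (verit) mult_left_le_one_le mult_nonneg_nonneg)
  ultimately have xb: "x^2 \<le> b^2" "b^2 < 1" by (auto simp: power2_eq_square)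
  have x0: "0 \<le> x^2" by simp
  show "0 < 1 - b^2" "0 < 1 - x^2" using xb by auto
  show "2 \<le> zeta x" unfolding zeta_def using xb x0 by (simp add: field_simps)
  show "zeta x \<le> 2 / (1 - b^2)" unfolding zeta_def using xb x0
    by (intro divide_left_mono) auto
qed

lemma good_point:
  assumes "negligible N" "p < (q::real)"
  shows "\<exists>x\<in>{p<..<q}. x \<notin> N"
proof (rule ccontr)
  assume "\<not> ?thesis"
  hence "{p<..<q} \<subseteq> N" by auto
  hence "negligible {p<..<q}" using assms negligible_subset by blast
  thus False using negligible_interval(2)[of p q] assms by simp
qed

lemma lip_inv:
  assumes "0 < s"
  shows "\<exists>L. L-lipschitz_on {s..t} (\<lambda>x::real. 1 / x)"
proof (rule lip_deriv[where f'="\<lambda>x. - 1 / x^2" and B="1/s^2"])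
  fix x assume x: "x \<in> {s..t}"
  hence "x > 0" using assms by auto
  thus "((\<lambda>x::real. 1 / x) has_real_derivative - 1 / x^2) (at x)"
    by (auto intro!: derivative_eq_intros simp: power2_eq_square)
  have "s^2 \<le> x^2" using x assms by (intro power_mono) auto
  thus "\<bar>- 1 / x^2\<bar> \<le> 1 / s^2" using assms by (simp add: divide_simps)
qed

lemma lip_ln:
  assumes "0 < s"
  shows "\<exists>L. L-lipschitz_on {s..t} (\<lambda>x::real. ln x)"
proof (rule lip_deriv[where f'="\<lambda>x. 1 / x" and B="1/s"])
  fix x assume x: "x \<in> {s..t}"
  hence "x > 0" using assms by auto
  thus "((\<lambda>x::real. ln x) has_real_derivative 1 / x) (at x)"
    by (auto intro!: derivative_eq_intros)
  show "\<bar>1 / x\<bar> \<le> 1 / s" using x assms by (simp add: divide_simps)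
qed

lemma lip_exp:
  assumes "0 \<le> K"
  shows "\<exists>L. L-lipschitz_on {s..t} (\<lambda>x::real. exp (K * x))"
proof (rule lip_deriv[where f'="\<lambda>x. K * exp (K * x)" and B="K * exp (K * t)"])
  fix x assume x: "x \<in> {s..t}"
  show "((\<lambda>x::real. exp (K * x)) has_real_derivative K * exp (K * x)) (at x)"
    by (auto intro!: derivative_eq_intros)
  have "exp (K * x) \<le> exp (K * t)" using x assms by (simp add: mult_left_mono)
  thus "\<bar>K * exp (K * x)\<bar> \<le> K * exp (K * t)" using assms by (simp add: mult_left_mono)
qed



theorem mainTheorem16:
  fixes b :: real and \<rho> u :: "real \<Rightarrow> real" and lam :: real
  assumes b: "0 < b" "b < 1"
    and rho_nonneg: "\<forall>t\<in>{0..b}. \<rho> t \<ge> 0"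
    and rho_mono: "mono_on {0..b} (\<lambda>t. \<rho> t / zeta t)"
    and rho_bdd: "bounded ((\<lambda>t. \<rho> t / zeta t) ` {0..b})"
    and u_lip: "\<exists>L. L-lipschitz_on {0..b} u"
    and ode: "AE x in lebesgue. x \<in> {0<..<b} \<longrightarrow>
               (u has_real_derivative (- ((1 / x + rho_tilde \<rho> x) * u x + lam * zeta x))) (at x)"
    and u0: "u 0 = 0" and ub: "u b = 1"
  shows "(\<forall>t\<in>{0..b}. u t \<ge> t / b) \<and>
         ((\<exists>t\<in>{0..<b}. \<rho> t \<noteq> 0) \<longrightarrow> (\<forall>t\<in>{0<..<b}. u t > t / b))"
proof -
  obtain L where L: "L-lipschitz_on {0..b} u" using u_lip by auto
  have L0: "0 \<le> L" using L lipschitz_on_nonneg by blast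
  have ubd: "\<And>x. x \<in> {0..b} \<Longrightarrow> \<bar>u x\<bar> \<le> L * x"
    using lipschitz_onD[OF L, of _ 0] u0 b by (auto simp: dist_real_def)
  obtain N where Nsub: "{x \<in> space lebesgue. \<not> (x \<in> {0<..<b} \<longrightarrow>
               (u has_real_derivative (- ((1 / x + rho_tilde \<rho> x) * u x + lam * zeta x))) (at x))} \<subseteq> N"
    and N0: "emeasure lebesgue N = 0" and Nsets: "N \<in> sets lebesgue"
    using AE_E[OF ode] by blast
  have negN: "negligible N" using N0 Nsets by (simp add: negligible_iff_null_sets null_sets_def)
  have uder: "\<And>x. x \<in> {0<..<b} \<Longrightarrow> x \<notin> N \<Longrightarrow>
      (u has_real_derivative (- ((1 / x + rho_tilde \<rho> x) * u x + lam * zeta x))) (at x)"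
    using Nsub by auto
  define \<mu> where "\<mu> = - lam"
  define \<sigma> where "\<sigma> = (\<lambda>t. \<rho> t / zeta t)"
  define g where "g = (\<lambda>t. 1 + t * \<sigma> t)"
  define y where "y = (\<lambda>t. u t / t)"
  have zge: "\<And>x. x \<in> {0..b} \<Longrightarrow> 2 \<le> zeta x" using zeta_facts b by auto
  have zle: "\<And>x. x \<in> {0..b} \<Longrightarrow> zeta x \<le> 2 / (1 - b^2)" using zeta_facts b by auto
  have zb: "0 < 1 - b^2" using zeta_facts(3)[of 0 b] b by auto
  have sig_nn: "\<And>x. x \<in> {0..b} \<Longrightarrow> 0 \<le> \<sigma> x"
    unfolding \<sigma>_def using rho_nonneg zge by (smt (verit) divide_nonneg_nonneg)
  have sig_mono: "\<And>x x'. x \<in> {0..b} \<Longrightarrow> x' \<in> {0..b} \<Longrightarrow> x \<le> x' \<Longrightarrow> \<sigma> x \<le> \<sigma> x'"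
    unfolding \<sigma>_def using rho_mono mono_onD by fastforce
  have g1: "\<And>x. x \<in> {0..b} \<Longrightarrow> 1 \<le> g x" unfolding g_def using sig_nn by simp
  have g_mono: "\<And>x x'. x \<in> {0..b} \<Longrightarrow> x' \<in> {0..b} \<Longrightarrow> x \<le> x' \<Longrightarrow> g x \<le> g x'"
  proof -
    fix x x' assume xx: "x \<in> {0..b}" "x' \<in> {0..b}" "x \<le> x'"
    have "x * \<sigma> x \<le> x' * \<sigma> x'" using xx sig_nn sig_mono by (intro mult_mono) auto
    thus "g x \<le> g x'" by (simp add: g_def)
  qed
  have rho_eq: "\<And>x. x \<in> {0..b} \<Longrightarrow> \<rho> x = \<sigma> x * zeta x"
    unfolding \<sigma>_def using zge by (smt (verit) nonzero_eq_divide_eq)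
  have yder: "\<And>x. x \<in> {0<..<b} \<Longrightarrow> x \<notin> N \<Longrightarrow>
      (y has_real_derivative (zeta x / x * (\<mu> - g x * y x))) (at x)"
  proof -
    fix x assume x: "x \<in> {0<..<b}" "x \<notin> N"
    have d: "(y has_real_derivative ((- ((1 / x + rho_tilde \<rho> x) * u x + lam * zeta x)) * x - u x * 1) / (x * x)) (at x)"
      unfolding y_def using x by (intro DERIV_divide uder DERIV_ident) auto
    have zid: "x^2 * zeta x + 2 = zeta x" using zeta_facts(4)[of x b] x b
      by (simp add: zeta_def field_simps)
    have "((- ((1 / x + rho_tilde \<rho> x) * u x + lam * zeta x)) * x - u x * 1) / (x * x)
        = zeta x / x * (\<mu> - g x * y x)"
      using x rho_eq[of x] zid unfolding rho_tilde_def \<mu>_def g_def y_def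
      by (simp add: field_simps power2_eq_square) algebra
    thus "(y has_real_derivative (zeta x / x * (\<mu> - g x * y x))) (at x)" using d by simp
  qed
  have ybd: "\<And>x. x \<in> {0<..b} \<Longrightarrow> \<bar>y x\<bar> \<le> L"
    unfolding y_def using ubd by (simp add: abs_div divide_simps)
  have ulip: "\<And>s t. 0 \<le> s \<Longrightarrow> t \<le> b \<Longrightarrow> \<exists>K. K-lipschitz_on {s..t} u"
    using L lipschitz_on_subset by (metis atLeastatMost_subset_iff order_refl)
  have ylip: "\<And>s t. 0 < s \<Longrightarrow> t \<le> b \<Longrightarrow> \<exists>K. K-lipschitz_on {s..t} y"
  proof -
    fix s t :: real assume st: "0 < s" "t \<le> b"
    have "\<exists>K. K-lipschitz_on {s..t} (\<lambda>x. u x * (1 / x))"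
      by (rule lip_mult[OF compact_Icc ulip lip_inv]) (use st in auto)
    thus "\<exists>K. K-lipschitz_on {s..t} y" by (simp add: y_def)
  qed
  have mupos: "\<mu> > 0"
  proof (rule ccontr)
    assume "\<not> \<mu> > 0" hence mu0: "\<mu> \<le> 0" by simp
    define s where "s = b / (L + 1)"
    have s: "0 < s" "s \<le> b" using b L0 by (auto simp: s_def divide_simps)
    define w where "w = (\<lambda>x. x * u x)"
    have "w b \<le> w s"
    proof (rule lemma_P'[where f=w and N=N])
      show "s \<le> b" by fact
      show "\<exists>L. L-lipschitz_on {s..b} w" unfolding w_def
        by (rule lip_mult[OF compact_Icc]) (use lipschitz_on_id ulip s in auto)
      show "negligible N" by fact
      show "0 < w b" using b ub by (simp add: w_def)
      fix x assume x: "x \<in> {s<..<b}" "x \<notin> N" "0 < w x"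
      have x0: "x \<in> {0<..<b}" using x s by auto
      have ux: "u x > 0" using x0 x(3) by (simp add: w_def zero_less_mult_iff)
      define U where "U = - ((1 / x + rho_tilde \<rho> x) * u x + lam * zeta x)"
      have "(w has_real_derivative (1 * u x + U * x)) (at x)" unfolding w_def U_def
        by (intro DERIV_mult DERIV_ident uder x0 x(2))
      moreover have "1 * u x + U * x \<le> 0"
      proof -
        have "1 * u x + U * x = - (x * x * zeta x + x * \<rho> x) * u x + x * \<mu> * zeta x"
          using x0 by (simp add: U_def rho_tilde_def \<mu>_def field_simps)
        moreover have "0 \<le> (x * x * zeta x + x * \<rho> x) * u x"
          using x0 zge[of x] rho_nonneg ux by (intro mult_nonneg_nonneg add_nonneg_nonneg) auto
        moreover have "x * \<mu> * zeta x \<le> 0"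
          using x0 zge[of x] mu0 by (simp add: mult_nonneg_nonpos mult_nonpos_nonneg)
        ultimately show ?thesis by linarith
      qed
      ultimately show "\<exists>D\<le>0. (w has_real_derivative D) (at x)" by blast
    qed
    hence "b \<le> s * u s" using ub by (simp add: w_def)
    also have "\<dots> \<le> s * (L * s)" using ubd[of s] s by (intro mult_left_mono) auto
    also have "\<dots> \<le> L * s" using s b L0 by (simp add: mult_left_le_one_le mult_le_cancel_left1)
    also have "\<dots> < b" using s b L0 by (simp add: s_def field_simps)
    finally show False by simp
  qed
  have gy: "\<And>t. t \<in> {0<..b} \<Longrightarrow> \<mu> \<le> g t * y t"
  proof (rule ccontr)
    fix t assume t: "t \<in> {0<..b}" and nt: "\<not> \<mu> \<le> g t * y t"
    define c where "c = y t"
    have gt: "1 \<le> g t" using g1 t by auto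
    define \<delta>0 where "\<delta>0 = \<mu> - g t * max c 0"
    have d0: "\<delta>0 > 0"
    proof (cases "c \<ge> 0")
      case True thus ?thesis using nt by (simp add: \<delta>0_def c_def max_def)
    next
      case False thus ?thesis using mupos by (simp add: \<delta>0_def max_def)
    qed
    define \<delta> where "\<delta> = \<delta>0 / 2"
    define \<epsilon> where "\<epsilon> = \<delta> / g t"
    have dpos: "\<delta> > 0" and epos: "\<epsilon> > 0" using d0 gt by (auto simp: \<delta>_def \<epsilon>_def)
    have key: "g t * max (c + \<epsilon>) 0 \<le> \<mu> - \<delta>"
    proof -
      have "max (c + \<epsilon>) 0 \<le> max c 0 + \<epsilon>" using epos by auto
      hence "g t * max (c + \<epsilon>) 0 \<le> g t * (max c 0 + \<epsilon>)" using gt by (intro mult_left_mono) auto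
      also have "\<dots> = g t * max c 0 + \<delta>" using gt by (simp add: \<epsilon>_def distrib_left)
      also have "\<dots> = \<mu> - \<delta>" unfolding \<delta>_def \<delta>0_def by (simp add: field_simps)
      finally show ?thesis .
    qed
    define s where "s = t * exp (- (L + 1) / \<delta>)"
    have s: "0 < s" "s \<le> t" using t dpos L0 by (auto simp: s_def intro!: divide_nonpos_pos mult_left_le)
    have lns: "ln t - ln s = (L + 1) / \<delta>" using t dpos by (simp add: s_def ln_mult) (simp add: field_simps)
    define f where "f = (\<lambda>x. c + \<epsilon> - y x - 2 * \<delta> * (ln t - ln x))"
    have "f t \<le> f s"
    proof (rule lemma_P'[where f=f and N=N])
      show "s \<le> t" by fact
      show "\<exists>L. L-lipschitz_on {s..t} f" unfolding f_def
        by (intro lip_diff lip_const lip_mult[OF compact_Icc] ylip lip_ln) (use s t in auto)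
      show "negligible N" by fact
      show "0 < f t" using epos by (simp add: f_def c_def)
      fix x assume x: "x \<in> {s<..<t}" "x \<notin> N" "0 < f x"
      have x0: "x \<in> {0<..<b}" using x s t by auto
      have lnx: "0 \<le> ln t - ln x" using x s by auto
      have "0 \<le> 2 * \<delta> * (ln t - ln x)" using lnx dpos by simp
      hence yx: "y x < c + \<epsilon>" using x(3) by (simp add: f_def)
      have "g x * y x \<le> g t * max (y x) 0"
      proof (cases "y x \<ge> 0")
        case True
        have "g x \<le> g t" using g_mono x0 t x by auto
        thus ?thesis using True by (simp add: mult_right_mono max_def)
      next
        case False
        have "g x * y x \<le> 0" using False g1[of x] x0 by (simp add: mult_nonneg_nonpos)
        thus ?thesis using gt False by (simp add: max_def)
      qed
      also have "\<dots> \<le> g t * max (c + \<epsilon>) 0" using yx gt by (intro mult_left_mono) auto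
      finally have gyx: "g x * y x \<le> \<mu> - \<delta>" using key by linarith
      define Y where "Y = zeta x / x * (\<mu> - g x * y x)"
      have dl: "((\<lambda>z. 2 * \<delta> * (ln t - ln z)) has_real_derivative - (2 * \<delta> / x)) (at x)"
        using x0 by (auto intro!: derivative_eq_intros)
      have "(f has_real_derivative (0 - Y - (- (2 * \<delta> / x)))) (at x)"
        unfolding f_def Y_def using x0
        by (intro DERIV_diff DERIV_const yder x(2) dl) auto
      moreover have "0 - Y - (- (2 * \<delta> / x)) \<le> 0"
      proof -
        have "2 * \<delta> \<le> zeta x * (\<mu> - g x * y x)"
          using zge[of x] x0 gyx dpos by (intro mult_mono) auto
        hence "2 * \<delta> / x \<le> Y" using x0 by (simp add: Y_def divide_right_mono)
        thus ?thesis by simp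
      qed
      ultimately show "\<exists>D\<le>0. (f has_real_derivative D) (at x)" by blast
    qed
    hence "\<epsilon> \<le> c + \<epsilon> - y s - 2 * \<delta> * ((L + 1) / \<delta>)" using lns by (simp add: f_def c_def)
    hence "y s \<le> c - 2 * (L + 1)" using dpos by simp
    moreover have "\<bar>y s\<bar> \<le> L" "\<bar>c\<bar> \<le> L" using ybd s t by (auto simp: c_def)
    ultimately show False by (auto simp: abs_le_iff)
  qed
  have ymono: "\<And>s t. 0 < s \<Longrightarrow> s \<le> t \<Longrightarrow> t \<le> b \<Longrightarrow> y t \<le> y s"
  proof -
    fix s t :: real assume st: "0 < s" "s \<le> t" "t \<le> b"
    have "(\<lambda>x. - y x) s \<le> (\<lambda>x. - y x) t"
    proof (rule lemma_M[where N=N and f="\<lambda>x. - y x" and a=s and b=t])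
      show "s \<le> t" by fact
      show "\<exists>L. L-lipschitz_on {s..t} (\<lambda>x. - y x)"
        using lip_diff[OF lip_const ylip[OF st(1) st(3)], of 0] by simp
      show "negligible N" by fact
      fix x assume x: "x \<in> {s<..<t}" "x \<notin> N"
      have x0: "x \<in> {0<..<b}" using x st by auto
      have "((\<lambda>x. - y x) has_real_derivative - (zeta x / x * (\<mu> - g x * y x))) (at x)"
        by (intro DERIV_minus yder x0 x(2))
      moreover have "zeta x / x * (\<mu> - g x * y x) \<le> 0"
        using gy[of x] x0 zge[of x] by (intro mult_nonneg_nonpos) auto
      ultimately show "\<exists>D\<ge>0. ((\<lambda>x. - y x) has_real_derivative D) (at x)" by (intro exI[of _ "- (zeta x / x * (\<mu> - g x * y x))"]) auto
    qed
    thus "y t \<le> y s" by simp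
  qed
  have yb: "y b = 1 / b" using ub by (simp add: y_def)
  have part1: "\<forall>t\<in>{0..b}. u t \<ge> t / b"
  proof
    fix t assume t: "t \<in> {0..b}"
    show "u t \<ge> t / b"
    proof (cases "t = 0")
      case True thus ?thesis using u0 by simp
    next
      case False
      hence "1 / b \<le> y t" using ymono[of t b] t yb by auto
      hence "t * (1 / b) \<le> t * y t" using t by (intro mult_left_mono) auto
      thus ?thesis using False by (simp add: y_def)
    qed
  qed
  have part2: "(\<exists>t\<in>{0..<b}. \<rho> t \<noteq> 0) \<longrightarrow> (\<forall>t\<in>{0<..<b}. u t > t / b)"
  proof (intro impI ballI)
    fix t assume ex: "\<exists>t\<in>{0..<b}. \<rho> t \<noteq> 0" and t: "t \<in> {0<..<b}"
    show "u t > t / b"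
    proof (rule ccontr)
      assume "\<not> u t > t / b"
      hence "u t \<le> t / b" by simp
      hence "u t / t \<le> (t / b) / t" using t by (intro divide_right_mono) auto
      hence yt: "y t \<le> 1 / b" using t by (simp add: y_def)
      define c where "c = 1 / b"
      have cpos: "c > 0" using b by (simp add: c_def)
      have yconst_right: "\<And>x. x \<in> {t..b} \<Longrightarrow> y x = c"
      proof -
        fix x assume x: "x \<in> {t..b}"
        have "y x \<le> y t" using ymono[of t x] x t by auto
        moreover have "y b \<le> y x" using ymono[of x b] x t by auto
        ultimately show "y x = c" using yt yb by (simp add: c_def)
      qed
      have deriv0: "\<And>x p q. 0 \<le> p \<Longrightarrow> q \<le> b \<Longrightarrow> x \<in> {p<..<q} \<Longrightarrow> x \<notin> N \<Longrightarrow>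
          (\<And>z. z \<in> {p<..<q} \<Longrightarrow> y z = c) \<Longrightarrow> g x * c = \<mu>"
      proof -
        fix x p q assume pq: "0 \<le> p" "q \<le> b" "x \<in> {p<..<q}" "x \<notin> N"
          and yc: "\<And>z. z \<in> {p<..<q} \<Longrightarrow> y z = c"
        have x0: "x \<in> {0<..<b}" using pq by auto
        have "(y has_real_derivative 0) (at x)"
          by (rule has_field_derivative_transform_within_open[OF DERIV_const[of c "at x"], where S="{p<..<q}"])
             (use pq yc in auto)
        moreover have "(y has_real_derivative (zeta x / x * (\<mu> - g x * y x))) (at x)"
          using yder x0 pq by auto
        ultimately have "zeta x / x * (\<mu> - g x * y x) = 0" using DERIV_unique by blast
        hence "\<mu> - g x * y x = 0" using zge[of x] x0 by simp
        thus "g x * c = \<mu>" using yc[of x] pq by simp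
      qed
      obtain x1 where x1: "x1 \<in> {t<..<b}" "x1 \<notin> N" using good_point[OF negN, of t b] t by auto
      have gx1: "g x1 * c = \<mu>" using deriv0[of t b x1] yconst_right x1 t by auto
      have ge_c: "\<And>x. x \<in> {0<..t} \<Longrightarrow> c \<le> y x"
        using ymono yconst_right t by fastforce
      define Z where "Z = 2 / (1 - b^2)"
      have yleft: "\<And>s. s \<in> {0<..t} \<Longrightarrow> y s = c"
      proof -
        fix s assume s: "s \<in> {0<..t}"
        define K where "K = Z * g x1 / s"
        have Z0: "0 \<le> Z" using zb by (simp add: Z_def)
        have K0: "0 \<le> K" using Z0 g1[of x1] x1 s by (simp add: K_def)
        define F where "F = (\<lambda>x. (y x - c) * exp (K * x))"
        have "F s \<le> F t"
        proof (rule lemma_M[where N=N and f=F and a=s and b=t])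
          show "s \<le> t" using s by simp
          show "\<exists>L. L-lipschitz_on {s..t} F" unfolding F_def
            by (rule lip_mult[OF compact_Icc lip_diff[OF ylip lip_const] lip_exp[OF K0]]) (use s t in auto)
          show "negligible N" by fact
          fix x assume x: "x \<in> {s<..<t}" "x \<notin> N"
          have x0: "x \<in> {0<..<b}" using x s t by auto
          define Y where "Y = zeta x / x * (\<mu> - g x * y x)"
          have dF: "(F has_real_derivative ((Y - 0) * exp (K * x) + (K * exp (K * x)) * (y x - c))) (at x)"
            unfolding F_def Y_def
            by (intro DERIV_mult DERIV_diff yder x0 x(2) DERIV_const)
               (auto intro!: derivative_eq_intros)
          have "0 \<le> Y + K * (y x - c)"
          proof -
            have z0: "0 \<le> y x - c" using ge_c[of x] x x0 by auto
            have "g x \<le> g x1" using g_mono[of x x1] x0 x1 x t by auto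
            hence "g x * y x \<le> g x1 * y x" using z0 cpos by (intro mult_right_mono) auto
            hence A: "- (g x1 * (y x - c)) \<le> \<mu> - g x * y x" using gx1 by (simp add: algebra_simps)
            have zx: "zeta x / x \<le> Z / s"
              using zle[of x] x0 x s zb zge[of x] by (intro frac_le) (auto simp: Z_def)
            have zx0: "0 \<le> zeta x / x" using zge[of x] x0 by simp
            have gz: "0 \<le> g x1 * (y x - c)" using g1[of x1] x1 z0 t by (intro mult_nonneg_nonneg) auto
            have "- (Z / s * (g x1 * (y x - c))) \<le> - (zeta x / x * (g x1 * (y x - c)))"
              using mult_right_mono[OF zx gz] by simp
            also have "\<dots> \<le> Y" unfolding Y_def using mult_left_mono[OF A zx0] by simp
            finally have "- (Z / s * (g x1 * (y x - c))) \<le> Y" .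
            moreover have "K * (y x - c) = Z / s * (g x1 * (y x - c))" by (simp add: K_def)
            ultimately show ?thesis by linarith
          qed
          hence "0 \<le> exp (K * x) * (Y + K * (y x - c))" by simp
          moreover have "(Y - 0) * exp (K * x) + (K * exp (K * x)) * (y x - c) = exp (K * x) * (Y + K * (y x - c))"
            by (simp add: algebra_simps)
          ultimately have "0 \<le> (Y - 0) * exp (K * x) + (K * exp (K * x)) * (y x - c)" by simp
          thus "\<exists>D\<ge>0. (F has_real_derivative D) (at x)" using dF by blast
        qed
        hence "(y s - c) * exp (K * s) \<le> 0" using yconst_right[of t] t by (simp add: F_def)
        hence "y s - c \<le> 0" by (simp add: mult_le_0_iff)
        thus "y s = c" using ge_c[OF s] by simp
      qed
      have yall: "\<And>x. x \<in> {0<..<b} \<Longrightarrow> y x = c"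
      proof -
        fix x assume x: "x \<in> {0<..<b}"
        show "y x = c"
        proof (cases "x \<le> t")
          case True thus ?thesis using yleft x by auto
        next
          case False thus ?thesis using yconst_right x by auto
        qed
      qed
      have gall: "\<And>x. x \<in> {0<..<b} \<Longrightarrow> x \<notin> N \<Longrightarrow> g x * c = \<mu>"
        using deriv0[of 0 b] yall by auto
      obtain B where B: "\<And>x. x \<in> {0..b} \<Longrightarrow> \<bar>\<sigma> x\<bar> \<le> B"
        using rho_bdd unfolding bounded_iff \<sigma>_def by (metis imageI real_norm_def)
      have B0: "0 \<le> B" using B[of 0] b by (smt (verit) atLeastAtMost_iff)
      have mu_c: "\<mu> = c"
      proof (rule ccontr)
        assume ne: "\<mu> \<noteq> c"
        have "c \<le> g x1 * c" using g1[of x1] x1 cpos t by simp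
        hence mc: "\<mu> > c" using gx1 ne by simp
        define r where "r = min b ((\<mu> - c) / (c * (B + 1)))"
        have r0: "0 < r" using b mc cpos B0 by (simp add: r_def)
        obtain x where x: "x \<in> {0<..<r}" "x \<notin> N" using good_point[OF negN r0] by auto
        have xb: "x \<in> {0<..<b}" using x by (auto simp: r_def)
        have "\<mu> - c = c * (x * \<sigma> x)" using gall[OF xb x(2)] by (simp add: g_def algebra_simps)
        also have "\<dots> \<le> c * (x * B)"
          using B[of x] xb cpos by (intro mult_left_mono) auto
        also have "c * (x * B) \<le> c * (r * B)" using x cpos B0 by (intro mult_left_mono mult_right_mono) auto
        also have "c * (r * B) < c * (r * (B + 1))" using cpos r0 by simp
        also have "c * (r * (B + 1)) \<le> c * ((\<mu> - c) / (c * (B + 1)) * (B + 1))"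
          using cpos B0 by (intro mult_left_mono mult_right_mono) (auto simp: r_def)
        also have "\<dots> = \<mu> - c"
        proof -
          have "c + B * c > 0" using cpos B0 by (simp add: add_pos_nonneg)
          thus ?thesis using cpos by (simp add: field_simps)
        qed
        finally show False by simp
      qed
      have sig0: "\<And>x. x \<in> {0<..<b} \<Longrightarrow> x \<notin> N \<Longrightarrow> \<sigma> x = 0"
      proof -
        fix x assume x: "x \<in> {0<..<b}" "x \<notin> N"
        have "c * (x * \<sigma> x) = 0" using gall[OF x] mu_c by (simp add: g_def algebra_simps)
        thus "\<sigma> x = 0" using cpos x by simp
      qed
      obtain t0 where t0: "t0 \<in> {0..<b}" "\<rho> t0 \<noteq> 0" using ex by auto
      obtain x where x: "x \<in> {t0<..<b}" "x \<notin> N" using good_point[OF negN, of t0 b] t0 by auto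
      have "\<sigma> t0 \<le> \<sigma> x" using sig_mono[of t0 x] t0 x by auto
      moreover have "\<sigma> x = 0" using sig0 x t0 by auto
      moreover have "0 \<le> \<sigma> t0" using sig_nn t0 by auto
      ultimately have "\<sigma> t0 = 0" by simp
      thus False using rho_eq[of t0] t0 by simp
    qed
  qed
  show ?thesis using part1 part2 by blast
qed

end
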